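(* Let $0<a<b$. The infinite server problem on the real line with source $0$ is competitive if and only if the infinite server problem on $(\{0\}\cup[a,b],0)$ (the subspace $\{0\}\cup[a,b]$ of the real line with source $0$) is competitive.
   Context: Infinite server problem on $(M,s)$: $M$ is a metric space and $s\in M$ the source; an unbounded number of servers initially reside at $s$. A finite sequence of requests (points of $M$) is revealed one by one; each must be served immediately, without knowledge of future requests, by moving some server to it; the cost is the total distance traveled. The problem is competitive if there is a deterministic online algorithm and constants $\rho,c$ with $ALG(\sigma)\le\rho\,OPT(\sigma)+c$ for all request sequences $\sigma$. *)

theory Defs
  imports "HOL-Analysis.Analysis"
begin

text \<open>Servers are indexed by nat; a configuration maps each server to its position.\<close>

fun serve_cost :: "(nat \<Rightarrow> 'a::metric_space) \<Rightarrow> nat list \<Rightarrow> 'a list \<Rightarrow> real" where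
  "serve_cost c (i # is) (r # rs) = dist (c i) r + serve_cost (c(i := r)) is rs"
| "serve_cost c _ _ = 0"

definition opt_cost :: "'a::metric_space \<Rightarrow> 'a list \<Rightarrow> real" where
  "opt_cost s \<sigma> = Inf {serve_cost (\<lambda>_. s) cs \<sigma> | cs. length cs = length \<sigma>}"

text \<open>A deterministic online algorithm chooses the serving server based only on the
  requests revealed so far (the current request being the last element).\<close>
definition online_choices :: "('a list \<Rightarrow> nat) \<Rightarrow> 'a list \<Rightarrow> nat list" where
  "online_choices A \<sigma> = map (\<lambda>k. A (take (Suc k) \<sigma>)) [0..<length \<sigma>]"

definition alg_cost :: "('a list \<Rightarrow> nat) \<Rightarrow> 'a::metric_space \<Rightarrow> 'a list \<Rightarrow> real" where
  "alg_cost A s \<sigma> = serve_cost (\<lambda>_. s) (online_choices A \<sigma>) \<sigma>"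

definition competitive :: "'a::metric_space set \<Rightarrow> 'a \<Rightarrow> bool" where
  "competitive M s \<longleftrightarrow>
     (\<exists>(A :: 'a list \<Rightarrow> nat) (\<rho>::real) (c::real). \<forall>\<sigma>. set \<sigma> \<subseteq> M \<longrightarrow>
        alg_cost A s \<sigma> \<le> \<rho> * opt_cost s \<sigma> + c)"

end

theory Submission
  imports Defs
begin


definition cfg :: "(nat \<Rightarrow> 'a) \<Rightarrow> (nat \<times> 'a) list \<Rightarrow> nat \<Rightarrow> 'a" where
  "cfg c p = foldl (\<lambda>c (i,x). c(i:=x)) c p"

lemma cfg_snoc[simp]: "cfg c (p@[(i,x)]) = (cfg c p)(i:=x)"
  by (simp add: cfg_def)
lemma cfg_nil[simp]: "cfg c [] = c"
  by (simp add: cfg_def)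
lemma cfg_Cons[simp]: "cfg c ((j,y)#p) = cfg (c(j:=y)) p"
  by (simp add: cfg_def)

definition sc :: "(nat \<Rightarrow> 'a::metric_space) \<Rightarrow> (nat \<times> 'a) list \<Rightarrow> real" where
  "sc c p = serve_cost c (map fst p) (map snd p)"

lemma sc_nil[simp]: "sc c [] = 0"
  by (simp add: sc_def)

lemma sc_snoc: "sc c (p@[(i,x)]) = sc c p + dist (cfg c p i) x"
proof (induction p arbitrary: c)
  case Nil
  then show ?case by (simp add: sc_def)
next
  case (Cons q p)
  obtain j y where q: "q = (j,y)" by fastforce
  show ?case using Cons[of "c(j:=y)"] by (simp add: q sc_def fun_upd_def)
qed

lemma sc_nonneg: "sc c p \<ge> 0"
proof (induction p rule: rev_induct)
  case Nil then show ?case by simp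
next
  case (snoc q p)
  obtain j y where q: "q = (j,y)" by fastforce
  show ?case using snoc by (simp add: q sc_snoc)
qed

lemma serve_cost_zip: "length cs = length \<sigma> \<Longrightarrow> serve_cost c cs \<sigma> = sc c (zip cs \<sigma>)"
  by (simp add: sc_def)

lemma online_choices_snoc: "online_choices A (\<sigma>@[x]) = online_choices A \<sigma> @ [A (\<sigma>@[x])]"
  by (simp add: online_choices_def)

lemma length_online_choices[simp]: "length (online_choices A \<sigma>) = length \<sigma>"
  by (simp add: online_choices_def)

lemma alg_cost_snoc: "alg_cost A s (\<sigma>@[x]) = alg_cost A s \<sigma> +
   dist (cfg (\<lambda>_. s) (zip (online_choices A \<sigma>) \<sigma>) (A (\<sigma>@[x]))) x"
  by (simp add: alg_cost_def online_choices_snoc serve_cost_zip sc_snoc)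

lemma alg_cost_nil[simp]: "alg_cost A s [] = 0"
  by (simp add: alg_cost_def online_choices_def)

lemma opt_cost_le: "length cs = length \<sigma> \<Longrightarrow> opt_cost s \<sigma> \<le> serve_cost (\<lambda>_. s) cs \<sigma>"
  unfolding opt_cost_def
  apply (rule cInf_lower)
   apply blast
  apply (rule bdd_belowI[of _ 0])
  using sc_nonneg serve_cost_zip by fastforce

lemma opt_cost_nil[simp]: "opt_cost s [] = 0"
  by (simp add: opt_cost_def)

lemma opt_cost_ge: assumes "\<And>cs. length cs = length \<sigma> \<Longrightarrow> z \<le> serve_cost (\<lambda>_. s) cs \<sigma>"
  shows "z \<le> opt_cost s \<sigma>"
  unfolding opt_cost_def
  apply (rule cInf_greatest)
  using assms by (auto intro: exI[of _ "replicate (length \<sigma>) 0"])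



locale geo =
  fixes a r :: real
  assumes apos: "0 < a" and rgt: "1 < r"
begin

definition cls :: "real \<Rightarrow> (int \<times> bool) option" where
  "cls x = (if x = 0 then None else Some (\<lfloor>log r (\<bar>x\<bar>/a)\<rfloor>, x > 0))"

definition L :: "int \<Rightarrow> real" where "L k = a * r powr (of_int k)"

definition w :: "(int \<times> bool) option \<Rightarrow> real" where
  "w \<kappa> = (case \<kappa> of None \<Rightarrow> 0 | Some (k,s) \<Rightarrow> r powr (of_int k))"

definition emb :: "(int \<times> bool) option \<Rightarrow> real \<Rightarrow> real" where
  "emb \<kappa> u = (case \<kappa> of None \<Rightarrow> 0 | Some (k,s) \<Rightarrow> (if s then 1 else -1) * r powr (of_int k) * u)"

definition scl :: "(int \<times> bool) option \<Rightarrow> real \<Rightarrow> real" where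
  "scl \<kappa> x = (case \<kappa> of None \<Rightarrow> 0 | Some (k,s) \<Rightarrow> \<bar>x\<bar> / r powr (of_int k))"

definition sgd :: "bool \<Rightarrow> real \<Rightarrow> real" where
  "sgd s y = (if s then y else -y)"

lemma rpos: "0 < r" using rgt by simp

lemma L_pos: "0 < L k" using apos rgt by (simp add: L_def)

lemma w_nonneg: "0 \<le> w \<kappa>"
  by (auto simp: w_def split: option.splits)

lemma cls_None: "cls x = None \<longleftrightarrow> x = 0"
  by (simp add: cls_def)

lemma cls_Some:
  assumes "cls x = Some (k,s)"
  shows "sgd s x = \<bar>x\<bar>" "L k \<le> \<bar>x\<bar>" "\<bar>x\<bar> < r * L k"
proof -
  have x0: "x \<noteq> 0" and kk: "k = \<lfloor>log r (\<bar>x\<bar>/a)\<rfloor>" and ss: "s = (x > 0)"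
    using assms by (auto simp: cls_def split: if_splits)
  show "sgd s x = \<bar>x\<bar>" using x0 ss by (auto simp: sgd_def)
  have q: "\<bar>x\<bar>/a > 0" using x0 apos by simp
  have e: "r powr (log r (\<bar>x\<bar>/a)) = \<bar>x\<bar>/a" using q rgt by simp
  have "r powr (of_int k) \<le> r powr (log r (\<bar>x\<bar>/a))"
    using kk rgt by (intro powr_mono) auto
  then have "r powr (of_int k) \<le> \<bar>x\<bar>/a" using e by simp
  then show "L k \<le> \<bar>x\<bar>" using apos by (simp add: L_def field_simps)
  have "r powr (log r (\<bar>x\<bar>/a)) < r powr (of_int k + 1)"
    using kk rgt by (intro powr_less_mono) linarith+
  then have "\<bar>x\<bar>/a < r powr (of_int k) * r" using e rgt by (simp add: powr_add)
  then show "\<bar>x\<bar> < r * L k" using apos by (simp add: L_def field_simps)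
qed

lemma emb_scl: "emb (cls x) (scl (cls x) x) = x"
proof (cases "cls x")
  case None
  then have "emb (cls x) (scl (cls x) x) = 0" by (simp add: emb_def)
  moreover have "x = 0" using None cls_None by blast
  ultimately show ?thesis by simp
next
  case (Some ks)
  obtain k s where ks: "ks = (k,s)" by fastforce
  have "s = (0 < x)" "x \<noteq> 0" using Some ks by (auto simp: cls_def split: if_splits)
  then have sx: "(if s then 1 else -1) * \<bar>x\<bar> = x" by (cases s) auto
  have p: "r powr real_of_int k > 0" using rpos by simp
  have "emb (cls x) (scl (cls x) x) = (if s then 1 else -1) * (r powr real_of_int k * (\<bar>x\<bar> / r powr real_of_int k))"
    using Some ks by (simp add: emb_def scl_def)
  also have "\<dots> = x" using p sx by simp
  finally show ?thesis .
qed

lemma dist_emb: "dist (emb \<kappa> u) (emb \<kappa> v) = w \<kappa> * dist u v"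
proof (cases \<kappa>)
  case None then show ?thesis by (simp add: emb_def w_def)
next
  case (Some ks)
  obtain k s where ks: "ks = (k,s)" by fastforce
  have "\<bar>r powr real_of_int k * u - r powr real_of_int k * v\<bar> = r powr real_of_int k * \<bar>u - v\<bar>"
    by (metis abs_mult abs_of_nonneg powr_ge_zero right_diff_distrib)
  moreover have "dist (emb \<kappa> u) (emb \<kappa> v) = \<bar>(if s then 1 else -1) * (r powr real_of_int k * u - r powr real_of_int k * v)\<bar>"
    using Some ks by (simp add: emb_def dist_real_def right_diff_distrib)
  moreover have "\<bar>(if s then 1 else -1) * (t::real)\<bar> = \<bar>t\<bar>" for t by (cases s) auto
  ultimately show ?thesis using Some ks by (simp add: w_def dist_real_def)
qed

lemma scl_range: assumes "cls x = Some ks" shows "a \<le> scl (Some ks) x" "scl (Some ks) x < a * r"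
proof -
  obtain k s where ks: "ks = (k,s)" by fastforce
  have p: "r powr real_of_int k > 0" using rpos by simp
  have 1: "L k \<le> \<bar>x\<bar>" "\<bar>x\<bar> < r * L k" using cls_Some assms ks by blast+
  show "a \<le> scl (Some ks) x" using 1 p by (simp add: scl_def ks L_def field_simps)
  show "scl (Some ks) x < a * r" using 1 p by (simp add: scl_def ks L_def field_simps)
qed

end


context geo
begin

definition S :: "(int \<times> bool) option \<Rightarrow> real list \<Rightarrow> real list" where
  "S \<kappa> \<sigma> = map (scl \<kappa>) (filter (\<lambda>x. cls x = \<kappa>) \<sigma>)"

lemma S_snoc: "S \<kappa> (\<sigma>@[x]) = S \<kappa> \<sigma> @ (if cls x = \<kappa> then [scl \<kappa> x] else [])"
  by (simp add: S_def)

lemma S_nil[simp]: "S \<kappa> [] = []" by (simp add: S_def)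

definition Abar :: "(real list \<Rightarrow> nat) \<Rightarrow> real list \<Rightarrow> nat" where
  "Abar A p = to_nat (cls (last p), A (S (cls (last p)) p))"

lemma alg_decomp:
  "(\<forall>\<kappa> j. cfg (\<lambda>_. 0) (zip (online_choices (Abar A) \<sigma>) \<sigma>) (to_nat (\<kappa>,j))
        = emb \<kappa> (cfg (\<lambda>_. 0) (zip (online_choices A (S \<kappa> \<sigma>)) (S \<kappa> \<sigma>)) j))
   \<and> (\<forall>K. finite K \<longrightarrow> cls ` set \<sigma> \<subseteq> K \<longrightarrow>
        alg_cost (Abar A) 0 \<sigma> = (\<Sum>\<kappa>\<in>K. w \<kappa> * alg_cost A 0 (S \<kappa> \<sigma>)))"
proof (induction \<sigma> rule: rev_induct)
  case Nil
  have e0: "emb \<kappa> 0 = 0" for \<kappa> by (simp add: emb_def split: option.splits)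
  show ?case by (simp add: e0 online_choices_def)
next
  case (snoc x \<sigma>)
  define \<kappa>0 where "\<kappa>0 = cls x"
  define j0 where "j0 = A (S \<kappa>0 (\<sigma>@[x]))"
  define G where "G = cfg (\<lambda>_. 0) (zip (online_choices (Abar A) \<sigma>) \<sigma>)"
  define H where "H = (\<lambda>\<kappa>. cfg (\<lambda>_. 0) (zip (online_choices A (S \<kappa> \<sigma>)) (S \<kappa> \<sigma>)))"
  have IH1: "G (to_nat (\<kappa>,j)) = emb \<kappa> (H \<kappa> j)" for \<kappa> j using snoc.IH by (simp add: G_def H_def)
  have IH2: "finite K \<Longrightarrow> cls ` set \<sigma> \<subseteq> K \<Longrightarrow> alg_cost (Abar A) 0 \<sigma> = (\<Sum>\<kappa>\<in>K. w \<kappa> * alg_cost A 0 (S \<kappa> \<sigma>))" for K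
    using snoc.IH by blast
  have ab: "Abar A (\<sigma>@[x]) = to_nat (\<kappa>0, j0)" by (simp add: Abar_def \<kappa>0_def j0_def)
  have Sx: "S \<kappa>0 (\<sigma>@[x]) = S \<kappa>0 \<sigma> @ [scl \<kappa>0 x]" by (simp add: S_snoc \<kappa>0_def)
  have Sy: "\<kappa> \<noteq> \<kappa>0 \<Longrightarrow> S \<kappa> (\<sigma>@[x]) = S \<kappa> \<sigma>" for \<kappa> by (simp add: S_snoc \<kappa>0_def)
  have cfgG: "cfg (\<lambda>_. 0) (zip (online_choices (Abar A) (\<sigma>@[x])) (\<sigma>@[x])) = G(to_nat (\<kappa>0,j0) := x)"
    by (simp add: online_choices_snoc ab G_def)
  have cfgH0: "cfg (\<lambda>_. 0) (zip (online_choices A (S \<kappa>0 (\<sigma>@[x]))) (S \<kappa>0 (\<sigma>@[x]))) = (H \<kappa>0)(j0 := scl \<kappa>0 x)"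
    by (simp add: Sx online_choices_snoc H_def j0_def[unfolded Sx])
  have ex: "emb \<kappa>0 (scl \<kappa>0 x) = x" using emb_scl \<kappa>0_def by simp
  have part1: "\<forall>\<kappa> j. cfg (\<lambda>_. 0) (zip (online_choices (Abar A) (\<sigma>@[x])) (\<sigma>@[x])) (to_nat (\<kappa>,j))
        = emb \<kappa> (cfg (\<lambda>_. 0) (zip (online_choices A (S \<kappa> (\<sigma>@[x]))) (S \<kappa> (\<sigma>@[x]))) j)"
  proof (intro allI)
    fix \<kappa> j
    show "cfg (\<lambda>_. 0) (zip (online_choices (Abar A) (\<sigma>@[x])) (\<sigma>@[x])) (to_nat (\<kappa>,j))
        = emb \<kappa> (cfg (\<lambda>_. 0) (zip (online_choices A (S \<kappa> (\<sigma>@[x]))) (S \<kappa> (\<sigma>@[x]))) j)"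
    proof (cases "\<kappa> = \<kappa>0")
      case True
      then show ?thesis using IH1 ex by (simp add: cfgG cfgH0 H_def)
    next
      case False
      then show ?thesis using IH1 by (simp add: cfgG Sy H_def)
    qed
  qed
  have aA: "alg_cost (Abar A) 0 (\<sigma>@[x]) = alg_cost (Abar A) 0 \<sigma> + w \<kappa>0 * dist (H \<kappa>0 j0) (scl \<kappa>0 x)"
  proof -
    have "alg_cost (Abar A) 0 (\<sigma>@[x]) = alg_cost (Abar A) 0 \<sigma> + dist (G (to_nat (\<kappa>0,j0))) x"
      by (simp add: alg_cost_snoc ab G_def)
    also have "dist (G (to_nat (\<kappa>0,j0))) x = dist (emb \<kappa>0 (H \<kappa>0 j0)) (emb \<kappa>0 (scl \<kappa>0 x))"
      using IH1 ex by simp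
    finally show ?thesis by (simp add: dist_emb)
  qed
  have aS: "alg_cost A 0 (S \<kappa> (\<sigma>@[x])) = alg_cost A 0 (S \<kappa> \<sigma>) + (if \<kappa> = \<kappa>0 then dist (H \<kappa>0 j0) (scl \<kappa>0 x) else 0)" for \<kappa>
  proof (cases "\<kappa> = \<kappa>0")
    case True
    then show ?thesis by (simp add: Sx alg_cost_snoc H_def j0_def[unfolded Sx])
  next
    case False
    then show ?thesis by (simp add: Sy)
  qed
  have part2: "\<forall>K. finite K \<longrightarrow> cls ` set (\<sigma>@[x]) \<subseteq> K \<longrightarrow>
        alg_cost (Abar A) 0 (\<sigma>@[x]) = (\<Sum>\<kappa>\<in>K. w \<kappa> * alg_cost A 0 (S \<kappa> (\<sigma>@[x])))"
  proof (intro allI impI)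
    fix K :: "(int \<times> bool) option set"
    assume K: "finite K" "cls ` set (\<sigma>@[x]) \<subseteq> K"
    have k0: "\<kappa>0 \<in> K" using K by (auto simp: \<kappa>0_def)
    have "(\<Sum>\<kappa>\<in>K. w \<kappa> * alg_cost A 0 (S \<kappa> (\<sigma>@[x])))
       = (\<Sum>\<kappa>\<in>K. w \<kappa> * alg_cost A 0 (S \<kappa> \<sigma>)) + (\<Sum>\<kappa>\<in>K. (if \<kappa> = \<kappa>0 then w \<kappa>0 * dist (H \<kappa>0 j0) (scl \<kappa>0 x) else 0))"
    proof -
      have pt: "w \<kappa> * alg_cost A 0 (S \<kappa> (\<sigma>@[x])) = w \<kappa> * alg_cost A 0 (S \<kappa> \<sigma>) + (if \<kappa> = \<kappa>0 then w \<kappa>0 * dist (H \<kappa>0 j0) (scl \<kappa>0 x) else 0)" for \<kappa>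
        by (simp add: aS distrib_left)
      show ?thesis by (simp only: pt sum.distrib)
    qed
    also have "(\<Sum>\<kappa>\<in>K. (if \<kappa> = \<kappa>0 then w \<kappa>0 * dist (H \<kappa>0 j0) (scl \<kappa>0 x) else 0)) = w \<kappa>0 * dist (H \<kappa>0 j0) (scl \<kappa>0 x)"
      using K(1) k0 by (simp add: sum.delta)
    finally have tot: "(\<Sum>\<kappa>\<in>K. w \<kappa> * alg_cost A 0 (S \<kappa> (\<sigma>@[x]))) = (\<Sum>\<kappa>\<in>K. w \<kappa> * alg_cost A 0 (S \<kappa> \<sigma>)) + w \<kappa>0 * dist (H \<kappa>0 j0) (scl \<kappa>0 x)" .
    show "alg_cost (Abar A) 0 (\<sigma>@[x]) = (\<Sum>\<kappa>\<in>K. w \<kappa> * alg_cost A 0 (S \<kappa> (\<sigma>@[x])))"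
    proof -
      have "cls ` set \<sigma> \<subseteq> K" using K(2) by simp
      then have "alg_cost (Abar A) 0 \<sigma> = (\<Sum>\<kappa>\<in>K. w \<kappa> * alg_cost A 0 (S \<kappa> \<sigma>))" using IH2 K(1) by blast
      then show ?thesis using tot aA by simp
    qed
  qed
  show ?case using part1 part2 by (intro conjI)
qed

end


context geo
begin

definition psi :: "real \<Rightarrow> real" where "psi u = max 0 (min 1 (4*u - 1))"

definition phi :: "(int \<times> bool) option \<Rightarrow> real \<Rightarrow> real \<Rightarrow> real" where
  "phi \<kappa> y z = (case \<kappa> of None \<Rightarrow> 0 | Some (k,s) \<Rightarrow> min \<bar>y - z\<bar> (r * L k) * psi (sgd s y / L k))"

definition valid :: "(int \<times> bool) option \<Rightarrow> real \<Rightarrow> bool" where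
  "valid \<kappa> z \<longleftrightarrow> z = 0 \<or> cls z = \<kappa>"

lemma rL_pos: "0 < r * L k" using mult_pos_pos[OF rpos L_pos] .
lemma rL_nonneg: "0 \<le> r * L k" using rL_pos by (rule less_imp_le)

lemma psi_bounds: "0 \<le> psi u" "psi u \<le> 1" by (auto simp: psi_def)
lemma psi_lip: "\<bar>psi u - psi v\<bar> \<le> 4 * \<bar>u - v\<bar>" unfolding psi_def by (auto simp: max_def min_def abs_if)
lemma psi_low: "u \<le> 1/4 \<Longrightarrow> psi u = 0" by (auto simp: psi_def)
lemma psi_high: "u \<ge> 1/2 \<Longrightarrow> psi u = 1" by (auto simp: psi_def)

lemma sgd_dist: "\<bar>sgd s u - sgd s v\<bar> = \<bar>u - v\<bar>" by (auto simp: sgd_def)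

lemma valid_Some: assumes "valid (Some (k,s)) z"
  shows "sgd s z = 0 \<or> (L k \<le> sgd s z \<and> sgd s z < r * L k)"
proof (cases "z = 0")
  case True then show ?thesis by (simp add: sgd_def)
next
  case False
  then have c: "cls z = Some (k,s)" using assms by (simp add: valid_def)
  show ?thesis using cls_Some[OF c] by simp
qed

lemma valid_None: "valid None z \<Longrightarrow> z = 0"
  using cls_None by (auto simp: valid_def)

lemma valid_cls: "valid (cls x) x" by (simp add: valid_def)

lemma phi_nonneg: "0 \<le> phi \<kappa> y z"
proof -
  have "0 \<le> r * L k" for k by (rule rL_nonneg)
  then show ?thesis by (auto simp: phi_def split: option.splits intro!: mult_nonneg_nonneg psi_bounds)
qed

lemma phi_le: "phi (Some (k,s)) y z \<le> r * L k"
proof -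
  have "0 \<le> r * L k" by (rule rL_nonneg)
  moreover have "min \<bar>y - z\<bar> (r * L k) * psi (sgd s y / L k) \<le> min \<bar>y - z\<bar> (r * L k) * 1"
    using psi_bounds rL_nonneg[of k] by (intro mult_left_mono) auto
  ultimately show ?thesis by (simp add: phi_def)
qed

lemma prod_lip:
  fixes fx fy gx gy l R M :: real
  assumes "0 \<le> gx" "gx \<le> 1" "0 \<le> fy" "fy \<le> R" "\<bar>fx - fy\<bar> \<le> l" "\<bar>gx - gy\<bar> \<le> M"
  shows "\<bar>fx * gx - fy * gy\<bar> \<le> l + R * M"
proof -
  have "fx * gx - fy * gy = (fx - fy) * gx + fy * (gx - gy)" by (simp add: algebra_simps)
  then have "\<bar>fx * gx - fy * gy\<bar> \<le> \<bar>fx - fy\<bar> * gx + fy * \<bar>gx - gy\<bar>"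
    using assms by (simp add: abs_mult abs_triangle_ineq[THEN order_trans])
  also have "\<dots> \<le> l * 1 + R * M"
    using assms by (intro add_mono mult_mono) auto
  finally show ?thesis by simp
qed

lemma phi_lip: "\<bar>phi \<kappa> x z - phi \<kappa> y z\<bar> \<le> (1 + 4*r) * \<bar>x - y\<bar>"
proof (cases \<kappa>)
  case None then show ?thesis using rpos by (simp add: phi_def)
next
  case (Some ks)
  obtain k s where ks: "ks = (k,s)" by fastforce
  have Lp: "0 < L k" by (rule L_pos)
  have f: "\<bar>min \<bar>x - z\<bar> (r * L k) - min \<bar>y - z\<bar> (r * L k)\<bar> \<le> \<bar>x - y\<bar>" by linarith
  have "\<bar>psi (sgd s x / L k) - psi (sgd s y / L k)\<bar> \<le> 4 * \<bar>sgd s x / L k - sgd s y / L k\<bar>"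
    by (rule psi_lip)
  also have "\<bar>sgd s x / L k - sgd s y / L k\<bar> = \<bar>x - y\<bar> / L k"
    using Lp sgd_dist[of s x y] by (simp add: diff_divide_distrib[symmetric])
  finally have g: "\<bar>psi (sgd s x / L k) - psi (sgd s y / L k)\<bar> \<le> 4 * (\<bar>x - y\<bar> / L k)" .
  have "\<bar>phi \<kappa> x z - phi \<kappa> y z\<bar> \<le> \<bar>x - y\<bar> + r * L k * (4 * (\<bar>x - y\<bar> / L k))"
    unfolding Some ks phi_def option.case prod.case
    apply (rule prod_lip[OF psi_bounds(1) psi_bounds(2) _ _ f g])
    using rL_nonneg by simp_all
  also have "\<dots> = (1 + 4*r) * \<bar>x - y\<bar>" using Lp by (simp add: field_simps)
  finally show ?thesis .
qed

lemma phi_low: "sgd s y \<le> L k / 4 \<Longrightarrow> phi (Some (k,s)) y z = 0"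
  using L_pos[of k] by (simp add: phi_def psi_low)

lemma phi_high: assumes "valid (Some (k,s)) z" "2 * r * L k \<le> sgd s y"
  shows "phi (Some (k,s)) y z = r * L k"
proof -
  have Lp: "0 < L k" by (rule L_pos)
  have z: "sgd s z < r * L k" using valid_Some[OF assms(1)] rL_pos[of k] by auto
  have "r * L k \<le> \<bar>sgd s y - sgd s z\<bar>" using z assms(2) rL_pos[of k] by linarith
  then have m: "min \<bar>y - z\<bar> (r * L k) = r * L k" using sgd_dist[of s y z] by simp
  have "1/2 \<le> sgd s y / L k"
  proof -
    have "L k \<le> 2 * r * L k" using rgt Lp by simp
    then have "L k / 2 \<le> sgd s y" using assms(2) Lp by linarith
    then show ?thesis using Lp by (simp add: field_simps)
  qed
  then show ?thesis using m by (simp add: phi_def psi_high)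
qed

lemma phi_same: "phi \<kappa> x x = 0" by (simp add: phi_def rL_nonneg min_absorb1 split: option.splits)

lemma keyA: assumes "cls x = \<kappa>" "valid \<kappa> z"
  shows "\<bar>z - x\<bar> - phi \<kappa> y z \<le> 2 * r * \<bar>x - y\<bar>"
proof (cases \<kappa>)
  case None
  then have "x = 0" "z = 0" using assms cls_None valid_None by auto
  then show ?thesis using None rpos by (simp add: phi_def)
next
  case (Some ks)
  obtain k s where ks: "ks = (k,s)" by fastforce
  note c = cls_Some[OF assms(1)[unfolded Some ks]]
  have Lp: "0 < L k" by (rule L_pos)
  have vz: "sgd s z = 0 \<or> (L k \<le> sgd s z \<and> sgd s z < r * L k)" using valid_Some assms(2) Some ks by simp
  have e: "\<bar>z - x\<bar> \<le> r * L k"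
    using vz c sgd_dist[of s z x] Lp rgt by auto
  have xy: "\<bar>x - y\<bar> = \<bar>sgd s x - sgd s y\<bar>" using sgd_dist[of s x y] by simp
  have yz: "\<bar>y - z\<bar> = \<bar>sgd s y - sgd s z\<bar>" using sgd_dist[of s y z] by simp
  show ?thesis
  proof (cases "L k / 2 \<le> sgd s y")
    case True
    then have "1/2 \<le> sgd s y / L k" using Lp by (simp add: field_simps)
    then have ph: "phi \<kappa> y z = min \<bar>y - z\<bar> (r * L k)" using Some ks by (simp add: phi_def psi_high)
    have "\<bar>z - x\<bar> \<le> \<bar>x - y\<bar> + \<bar>y - z\<bar>" by linarith
    then have "\<bar>z - x\<bar> - phi \<kappa> y z \<le> \<bar>x - y\<bar>" using ph e by linarith
    moreover have "\<bar>x - y\<bar> \<le> 2 * r * \<bar>x - y\<bar>" using rgt by (simp add: mult_le_cancel_right1)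
    ultimately show ?thesis by linarith
  next
    case False
    then have "L k / 2 < \<bar>x - y\<bar>" using xy c by linarith
    then have "r * L k < 2 * r * \<bar>x - y\<bar>" using rpos by simp
    then show ?thesis using e phi_nonneg[of \<kappa> y z] by linarith
  qed
qed

end


context geo
begin

lemma L_shift: assumes "k \<le> K0" shows "L k = L K0 * (1/r) ^ nat (K0 - k)"
proof -
  define n where "n = nat (K0 - k)"
  have kn: "real_of_int k = real_of_int K0 + (- real n)" using assms by (simp add: n_def)
  have "r powr (real_of_int k) = r powr (real_of_int K0) * r powr (- real n)"
    unfolding kn by (rule powr_add)
  also have "r powr (- real n) = inverse (r powr real n)" by (rule powr_minus)
  also have "r powr real n = r ^ n" using rpos by (rule powr_realpow)
  also have "inverse (r ^ n) = (1/r) ^ n" by (simp add: power_one_over inverse_eq_divide)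
  finally show ?thesis by (simp add: L_def n_def)
qed

lemma geom_sum: assumes "finite F" "0 < \<beta>"
  shows "(\<Sum>k\<in>{k\<in>F. L k < \<beta>}. L k) \<le> \<beta> * r / (r - 1)"
proof (cases "{k\<in>F. L k < \<beta>} = {}")
  case True
  have "0 \<le> \<beta> * r / (r - 1)" using assms rgt by simp
  then show ?thesis unfolding True by simp
next
  case False
  define G where "G = {k\<in>F. L k < \<beta>}"
  have fG: "finite G" using assms by (simp add: G_def)
  define K0 where "K0 = Max G"
  have K0G: "K0 \<in> G" using fG False unfolding K0_def G_def by (intro Max_in) auto
  have leK0: "k \<in> G \<Longrightarrow> k \<le> K0" for k using fG unfolding K0_def by (intro Max_ge)
  define q where "q = 1/r"
  have q: "0 < q" "q < 1" using rgt by (auto simp: q_def)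
  have "(\<Sum>k\<in>G. L k) = (\<Sum>k\<in>G. L K0 * q ^ nat (K0 - k))"
    using L_shift leK0 unfolding q_def by (intro sum.cong) auto
  also have "\<dots> = L K0 * (\<Sum>k\<in>G. q ^ nat (K0 - k))" by (rule sum_distrib_left[symmetric])
  also have "(\<Sum>k\<in>G. q ^ nat (K0 - k)) = (\<Sum>n\<in>(\<lambda>k. nat (K0 - k)) ` G. q ^ n)"
  proof -
    have "inj_on (\<lambda>k. nat (K0 - k)) G"
    proof (rule inj_onI)
      fix u v assume "u \<in> G" "v \<in> G" "nat (K0 - u) = nat (K0 - v)"
      then show "u = v" using leK0[of u] leK0[of v] by linarith
    qed
    then show ?thesis by (simp add: sum.reindex)
  qed
  also have "L K0 * \<dots> \<le> L K0 * (\<Sum>n. q ^ n)"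
  proof (rule mult_left_mono)
    show "(\<Sum>n\<in>(\<lambda>k. nat (K0 - k)) ` G. q ^ n) \<le> (\<Sum>n. q ^ n)"
      using q fG by (intro sum_le_suminf summable_geometric) auto
    show "0 \<le> L K0" using L_pos[of K0] by simp
  qed
  also have "(\<Sum>n. q ^ n) = r / (r - 1)"
  proof -
    have "(\<Sum>n. q ^ n) = 1 / (1 - q)" using q by (intro suminf_geometric) simp
    also have "\<dots> = r / (r - 1)" using rgt by (simp add: q_def field_simps)
    finally show ?thesis .
  qed
  also have "L K0 * (r / (r - 1)) \<le> \<beta> * (r / (r - 1))"
    using K0G rgt by (intro mult_right_mono) (auto simp: G_def)
  finally show ?thesis by (simp add: G_def)
qed

definition C2 :: real where "C2 = (1 + 4*r) * (16 * r^2 / (r - 1))"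

lemma keyB: assumes F: "finite F" and V: "\<And>k. valid (Some (k,s)) (Z k)"
  shows "(\<Sum>k\<in>F. \<bar>phi (Some (k,s)) x (Z k) - phi (Some (k,s)) y (Z k)\<bar>) \<le> C2 * \<bar>x - y\<bar>"
proof -
  define D where "D k = \<bar>phi (Some (k,s)) x (Z k) - phi (Some (k,s)) y (Z k)\<bar>" for k
  define t where "t = sgd s y"
  define t' where "t' = sgd s x"
  define M where "M = max t t'"
  define m where "m = min t t'"
  define l where "l = \<bar>x - y\<bar>"
  have lM: "l = M - m" using sgd_dist[of s x y] by (auto simp: l_def M_def m_def t_def t'_def)
  have r1: "0 < r - 1" using rgt by simp
  have D_lip: "D k \<le> (1 + 4*r) * l" for k unfolding D_def l_def by (rule phi_lip)
  have D_bd: "D k \<le> r * L k" for k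
    using phi_nonneg[of "Some (k,s)" x "Z k"] phi_nonneg[of "Some (k,s)" y "Z k"]
      phi_le[of k s x "Z k"] phi_le[of k s y "Z k"] unfolding D_def by linarith
  have D_nn: "0 \<le> D k" for k unfolding D_def by simp
  have D_z1: "M \<le> L k / 4 \<Longrightarrow> D k = 0" for k
    using phi_low[of s x k "Z k"] phi_low[of s y k "Z k"] unfolding D_def M_def t_def t'_def by simp
  have D_z2: "2 * r * L k \<le> m \<Longrightarrow> D k = 0" for k
    using phi_high[OF V[of k], of x] phi_high[OF V[of k], of y] unfolding D_def m_def t_def t'_def by simp
  have C2ge: "8 * r^2 / (r - 1) \<le> C2"
  proof -
    have "8 * r^2 / (r - 1) \<le> 1 * (16 * r^2 / (r - 1))" using r1 by (simp add: divide_right_mono)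
    also have "\<dots> \<le> (1 + 4*r) * (16 * r^2 / (r - 1))" using r1 rpos by (intro mult_right_mono) auto
    finally show ?thesis by (simp add: C2_def)
  qed
  have sumD: "(\<Sum>k\<in>F. D k) \<le> C2 * l"
  proof (cases "M \<le> 0")
    case True
    have "D k = 0" for k using D_z1[of k] True L_pos[of k] by simp
    have "0 \<le> 8 * r^2 / (r - 1)" using r1 by simp
    then have "0 \<le> C2" using C2ge by linarith
    then show ?thesis using \<open>\<And>k. D k = 0\<close> by (simp add: l_def)
  next
    case Mpos: False
    show ?thesis
    proof (cases "2 * m < M")
      case True
      have "D k \<le> (if L k < 4 * M then r * L k else 0)" for k
        using D_bd[of k] D_z1[of k] by auto
      then have "(\<Sum>k\<in>F. D k) \<le> (\<Sum>k\<in>F. (if L k < 4 * M then r * L k else 0))"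
        by (rule sum_mono)
      also have "\<dots> = (\<Sum>k\<in>{k\<in>F. L k < 4 * M}. r * L k)" using F by (simp add: sum.inter_filter)
      also have "\<dots> = r * (\<Sum>k\<in>{k\<in>F. L k < 4 * M}. L k)" by (simp add: sum_distrib_left)
      also have "\<dots> \<le> r * (4 * M * r / (r - 1))" using geom_sum[OF F, of "4*M"] Mpos rpos
        by (intro mult_left_mono) auto
      also have "\<dots> = (8 * r^2 / (r - 1)) * (M / 2)" by (simp add: field_simps power2_eq_square)
      also have "\<dots> \<le> (8 * r^2 / (r - 1)) * l" using True lM r1 by (intro mult_left_mono) auto
      also have "\<dots> \<le> C2 * l" using C2ge l_def by (intro mult_right_mono) auto
      finally show ?thesis .
    next
      case False
      have mpos: "0 < m" using False Mpos by simp
      define c where "c = (1 + 4*r) * l * (2 * r / m)"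
      have cnn: "0 \<le> c" using mpos rpos by (simp add: c_def l_def)
      have "D k \<le> (if L k < 4 * M then c * L k else 0)" for k
      proof (cases "L k < 4 * M")
        case True
        show ?thesis
        proof (cases "2 * r * L k \<le> m")
          case True
          then show ?thesis using D_z2[of k] cnn L_pos[of k] by simp
        next
          case False
          then have "1 \<le> 2 * r * L k / m" using mpos by simp
          then have "(1 + 4*r) * l * 1 \<le> (1 + 4*r) * l * (2 * r * L k / m)"
            using rpos by (intro mult_left_mono) (auto simp: l_def)
          also have "\<dots> = c * L k" using mpos by (simp add: c_def field_simps)
          finally show ?thesis using D_lip[of k] True by simp
        qed
      next
        case False
        then show ?thesis using D_z1[of k] by simp
      qed
      then have "(\<Sum>k\<in>F. D k) \<le> (\<Sum>k\<in>F. (if L k < 4 * M then c * L k else 0))"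
        by (rule sum_mono)
      also have "\<dots> = (\<Sum>k\<in>{k\<in>F. L k < 4 * M}. c * L k)" using F by (simp add: sum.inter_filter)
      also have "\<dots> = c * (\<Sum>k\<in>{k\<in>F. L k < 4 * M}. L k)" by (simp add: sum_distrib_left)
      also have "\<dots> \<le> c * (4 * M * r / (r - 1))" using geom_sum[OF F, of "4*M"] Mpos cnn
        by (intro mult_left_mono) auto
      also have "\<dots> = ((1 + 4*r) * l * (8 * r^2 / (r - 1))) * (M / m)"
        using mpos r1 by (simp add: c_def field_simps power2_eq_square)
      also have "\<dots> \<le> ((1 + 4*r) * l * (8 * r^2 / (r - 1))) * 2"
      proof (rule mult_left_mono)
        show "M / m \<le> 2" using False mpos by (simp add: field_simps)
        show "0 \<le> (1 + 4*r) * l * (8 * r^2 / (r - 1))" using rpos r1 by (simp add: l_def)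
      qed
      also have "\<dots> = C2 * l" by (simp add: C2_def)
      finally show ?thesis .
    qed
  qed
  then show ?thesis by (simp add: D_def l_def)
qed

lemma sumK: assumes K: "finite K" and V: "\<And>\<kappa>. valid \<kappa> (Z \<kappa>)"
  shows "(\<Sum>\<kappa>\<in>K. \<bar>phi \<kappa> x (Z \<kappa>) - phi \<kappa> y (Z \<kappa>)\<bar>) \<le> 2 * C2 * \<bar>x - y\<bar>"
proof -
  define D where "D \<kappa> = \<bar>phi \<kappa> x (Z \<kappa>) - phi \<kappa> y (Z \<kappa>)\<bar>" for \<kappa>
  define ST where "ST = (\<lambda>k::int. Some (k, True))"
  define SF where "SF = (\<lambda>k::int. Some (k, False))"
  define FT where "FT = ST -` K"
  define FF where "FF = SF -` K"
  have injT: "inj ST" and injF: "inj SF" by (auto simp: ST_def SF_def inj_def)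
  have fT: "finite FT" using K injT by (simp add: FT_def finite_vimageI)
  have fF: "finite FF" using K injF by (simp add: FF_def finite_vimageI)
  define K' where "K' = {None} \<union> (ST ` FT \<union> SF ` FF)"
  have KK': "K \<subseteq> K'"
  proof
    fix \<kappa> assume "\<kappa> \<in> K"
    then show "\<kappa> \<in> K'"
    proof (cases \<kappa>)
      case (Some ks)
      obtain k s where ks: "ks = (k,s)" by fastforce
      show ?thesis using \<open>\<kappa> \<in> K\<close> Some ks
        by (cases s) (auto simp: K'_def FT_def FF_def ST_def SF_def image_iff)
    qed (simp add: K'_def)
  qed
  have fK': "finite K'" using fT fF by (simp add: K'_def)
  have Dnn: "0 \<le> D \<kappa>" for \<kappa> by (simp add: D_def)
  have D0: "D None = 0" by (simp add: D_def phi_def)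
  have "(\<Sum>\<kappa>\<in>K. D \<kappa>) \<le> (\<Sum>\<kappa>\<in>K'. D \<kappa>)"
    using fK' KK' Dnn by (intro sum_mono2) auto
  also have "(\<Sum>\<kappa>\<in>K'. D \<kappa>) = D None + (\<Sum>\<kappa>\<in>ST ` FT. D \<kappa>) + (\<Sum>\<kappa>\<in>SF ` FF. D \<kappa>)"
  proof -
    have d1: "{None} \<inter> (ST ` FT \<union> SF ` FF) = {}" by (auto simp: ST_def SF_def)
    have d2: "ST ` FT \<inter> SF ` FF = {}" by (auto simp: ST_def SF_def)
    have "(\<Sum>\<kappa>\<in>K'. D \<kappa>) = (\<Sum>\<kappa>\<in>{None}. D \<kappa>) + (\<Sum>\<kappa>\<in>ST ` FT \<union> SF ` FF. D \<kappa>)"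
      unfolding K'_def using fT fF d1 by (intro sum.union_disjoint) auto
    also have "(\<Sum>\<kappa>\<in>ST ` FT \<union> SF ` FF. D \<kappa>) = (\<Sum>\<kappa>\<in>ST ` FT. D \<kappa>) + (\<Sum>\<kappa>\<in>SF ` FF. D \<kappa>)"
      using fT fF d2 by (intro sum.union_disjoint) auto
    finally show ?thesis by simp
  qed
  also have "(\<Sum>\<kappa>\<in>ST ` FT. D \<kappa>) = (\<Sum>k\<in>FT. D (ST k))"
    using injT by (simp add: sum.reindex inj_on_def inj_def)
  also have "(\<Sum>\<kappa>\<in>SF ` FF. D \<kappa>) = (\<Sum>k\<in>FF. D (SF k))"
    using injF by (simp add: sum.reindex inj_on_def inj_def)
  also have "(\<Sum>k\<in>FT. D (ST k)) \<le> C2 * \<bar>x - y\<bar>"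
    unfolding D_def ST_def using keyB[OF fT, of True "\<lambda>k. Z (Some (k,True))" x y] V by simp
  also have "(\<Sum>k\<in>FF. D (SF k)) \<le> C2 * \<bar>x - y\<bar>"
    unfolding D_def SF_def using keyB[OF fF, of False "\<lambda>k. Z (Some (k,False))" x y] V by simp
  finally have "(\<Sum>\<kappa>\<in>K. D \<kappa>) \<le> 2 * C2 * \<bar>x - y\<bar>" using D0 by simp
  then show ?thesis by (simp add: D_def)
qed

definition Cst :: real where "Cst = 2 * r + 2 * C2"

lemma keyStep: assumes K: "finite K" "cls x \<in> K" and V: "\<And>\<kappa>. valid \<kappa> (Z \<kappa>)"
  shows "\<bar>Z (cls x) - x\<bar> + (\<Sum>\<kappa>\<in>K. phi \<kappa> x ((Z(cls x := x)) \<kappa>) - phi \<kappa> y (Z \<kappa>)) \<le> Cst * \<bar>x - y\<bar>"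
proof -
  define k0 where "k0 = cls x"
  have "(\<Sum>\<kappa>\<in>K. phi \<kappa> x ((Z(k0 := x)) \<kappa>) - phi \<kappa> y (Z \<kappa>))
      = (phi k0 x x - phi k0 y (Z k0)) + (\<Sum>\<kappa>\<in>K - {k0}. phi \<kappa> x ((Z(k0 := x)) \<kappa>) - phi \<kappa> y (Z \<kappa>))"
    using K by (simp add: sum.remove k0_def)
  also have "(\<Sum>\<kappa>\<in>K - {k0}. phi \<kappa> x ((Z(k0 := x)) \<kappa>) - phi \<kappa> y (Z \<kappa>))
      = (\<Sum>\<kappa>\<in>K - {k0}. phi \<kappa> x (Z \<kappa>) - phi \<kappa> y (Z \<kappa>))"
    by (intro sum.cong) auto
  also have "\<dots> \<le> (\<Sum>\<kappa>\<in>K - {k0}. \<bar>phi \<kappa> x (Z \<kappa>) - phi \<kappa> y (Z \<kappa>)\<bar>)"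
    by (intro sum_mono) simp
  also have "\<dots> \<le> (\<Sum>\<kappa>\<in>K. \<bar>phi \<kappa> x (Z \<kappa>) - phi \<kappa> y (Z \<kappa>)\<bar>)"
    using K by (intro sum_mono2) auto
  also have "\<dots> \<le> 2 * C2 * \<bar>x - y\<bar>" using sumK[OF K(1) V] .
  finally have s1: "(\<Sum>\<kappa>\<in>K. phi \<kappa> x ((Z(k0 := x)) \<kappa>) - phi \<kappa> y (Z \<kappa>))
      \<le> (phi k0 x x - phi k0 y (Z k0)) + 2 * C2 * \<bar>x - y\<bar>" by simp
  have s2: "\<bar>Z k0 - x\<bar> - phi k0 y (Z k0) \<le> 2 * r * \<bar>x - y\<bar>"
    using keyA[of x k0 "Z k0" y] V k0_def by simp
  have "\<bar>Z k0 - x\<bar> + (\<Sum>\<kappa>\<in>K. phi \<kappa> x ((Z(k0 := x)) \<kappa>) - phi \<kappa> y (Z \<kappa>)) \<le> Cst * \<bar>x - y\<bar>"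
    using s1 s2 phi_same[of k0 x] by (simp add: Cst_def algebra_simps)
  then show ?thesis by (simp add: k0_def)
qed

end


context geo
begin

definition Pz :: "(int \<times> bool) option \<Rightarrow> (nat \<times> real) list \<Rightarrow> (nat \<times> real) list" where
  "Pz \<kappa> p = map (\<lambda>(i,x). (i, scl \<kappa> x)) (filter (\<lambda>(i,x). cls x = \<kappa>) p)"

lemma Pz_snoc: "Pz \<kappa> (p@[(i,x)]) = Pz \<kappa> p @ (if cls x = \<kappa> then [(i, scl \<kappa> x)] else [])"
  by (simp add: Pz_def)

lemma Pz_nil[simp]: "Pz \<kappa> [] = []" by (simp add: Pz_def)

lemma Pz_snd: "map snd (Pz \<kappa> p) = S \<kappa> (map snd p)"
  by (induction p) (auto simp: Pz_def S_def)

lemma Pz_len: "length (map fst (Pz \<kappa> p)) = length (S \<kappa> (map snd p))"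
  by (metis Pz_snd length_map)

abbreviation Zf :: "(nat \<times> real) list \<Rightarrow> nat \<Rightarrow> (int \<times> bool) option \<Rightarrow> real" where
  "Zf p i \<kappa> \<equiv> emb \<kappa> (cfg (\<lambda>_. 0) (Pz \<kappa> p) i)"

lemma emb0: "emb \<kappa> 0 = 0" by (simp add: emb_def split: option.splits)

lemma valid_inv: "valid \<kappa> (Zf p i \<kappa>)"
proof (induction p rule: rev_induct)
  case Nil
  then show ?case by (simp add: emb0 valid_def)
next
  case (snoc q p)
  obtain j x where q: "q = (j,x)" by fastforce
  show ?case
  proof (cases "cls x = \<kappa> \<and> i = j")
    case True
    then have "Zf (p@[q]) i \<kappa> = emb (cls x) (scl (cls x) x)" by (simp add: q Pz_snoc)
    also have "\<dots> = x" by (rule emb_scl)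
    finally show ?thesis using True valid_cls[of x] by metis
  next
    case False
    then have "Zf (p@[q]) i \<kappa> = Zf p i \<kappa>" by (auto simp: q Pz_snoc)
    then show ?thesis using snoc by simp
  qed
qed

definition Phi :: "nat set \<Rightarrow> (int \<times> bool) option set \<Rightarrow> (nat \<times> real) list \<Rightarrow> real" where
  "Phi I K p = (\<Sum>i\<in>I. \<Sum>\<kappa>\<in>K. phi \<kappa> (cfg (\<lambda>_. 0) p i) (Zf p i \<kappa>))"

lemma Phi_nonneg: "0 \<le> Phi I K p"
  unfolding Phi_def by (intro sum_nonneg) (simp add: phi_nonneg)

lemma optdec:
  assumes I: "finite I" "fst ` set p \<subseteq> I" and K: "finite K" "cls ` snd ` set p \<subseteq> K"
  shows "(\<Sum>\<kappa>\<in>K. w \<kappa> * sc (\<lambda>_. 0) (Pz \<kappa> p)) + Phi I K p \<le> Cst * sc (\<lambda>_. 0) p"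
  using assms
proof (induction p rule: rev_induct)
  case Nil
  have "phi \<kappa> 0 (emb \<kappa> 0) = 0" for \<kappa> by (simp add: emb0 phi_same)
  then show ?case by (simp add: Phi_def emb0)
next
  case (snoc q p)
  obtain i x where q: "q = (i,x)" by fastforce
  have iI: "i \<in> I" using snoc.prems by (auto simp: q)
  have xK: "cls x \<in> K" using snoc.prems by (auto simp: q)
  have IH: "(\<Sum>\<kappa>\<in>K. w \<kappa> * sc (\<lambda>_. 0) (Pz \<kappa> p)) + Phi I K p \<le> Cst * sc (\<lambda>_. 0) p"
    using snoc.prems by (intro snoc.IH) auto
  define k0 where "k0 = cls x"
  define G where "G = cfg (\<lambda>_. 0::real) p"
  define y where "y = G i"
  define Z where "Z = Zf p i"
  have scp: "sc (\<lambda>_. 0) (p@[q]) = sc (\<lambda>_. 0) p + \<bar>y - x\<bar>"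
    by (simp add: q sc_snoc y_def G_def dist_real_def)
  have scP: "w \<kappa> * sc (\<lambda>_. 0) (Pz \<kappa> (p@[q])) = w \<kappa> * sc (\<lambda>_. 0) (Pz \<kappa> p) +
      (if \<kappa> = k0 then \<bar>Z k0 - x\<bar> else 0)" for \<kappa>
  proof (cases "\<kappa> = k0")
    case True
    have "w \<kappa> * sc (\<lambda>_. 0) (Pz \<kappa> (p@[q])) = w \<kappa> * sc (\<lambda>_. 0) (Pz \<kappa> p) +
       w \<kappa> * dist (cfg (\<lambda>_. 0) (Pz \<kappa> p) i) (scl \<kappa> x)"
      using True by (simp add: q Pz_snoc sc_snoc k0_def distrib_left)
    also have "w \<kappa> * dist (cfg (\<lambda>_. 0) (Pz \<kappa> p) i) (scl \<kappa> x) = dist (Z k0) x"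
      using True dist_emb[of k0 "cfg (\<lambda>_. 0) (Pz \<kappa> p) i" "scl k0 x"] emb_scl[of x]
      by (simp add: Z_def k0_def)
    finally show ?thesis using True by (simp add: dist_real_def)
  next
    case False
    then show ?thesis by (simp add: q Pz_snoc k0_def)
  qed
  have sum1: "(\<Sum>\<kappa>\<in>K. w \<kappa> * sc (\<lambda>_. 0) (Pz \<kappa> (p@[q]))) = (\<Sum>\<kappa>\<in>K. w \<kappa> * sc (\<lambda>_. 0) (Pz \<kappa> p)) + \<bar>Z k0 - x\<bar>"
  proof -
    have "(\<Sum>\<kappa>\<in>K. w \<kappa> * sc (\<lambda>_. 0) (Pz \<kappa> (p@[q]))) = (\<Sum>\<kappa>\<in>K. w \<kappa> * sc (\<lambda>_. 0) (Pz \<kappa> p)) + (\<Sum>\<kappa>\<in>K. if \<kappa> = k0 then \<bar>Z k0 - x\<bar> else 0)"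
      by (simp only: scP sum.distrib)
    also have "(\<Sum>\<kappa>\<in>K. if \<kappa> = k0 then \<bar>Z k0 - x\<bar> else 0) = \<bar>Z k0 - x\<bar>"
      using snoc.prems(3) xK by (simp add: sum.delta k0_def)
    finally show ?thesis .
  qed
  define f where "f j = (\<Sum>\<kappa>\<in>K. phi \<kappa> (cfg (\<lambda>_. 0) p j) (Zf p j \<kappa>))" for j
  define f' where "f' j = (\<Sum>\<kappa>\<in>K. phi \<kappa> (cfg (\<lambda>_. 0) (p@[q]) j) (Zf (p@[q]) j \<kappa>))" for j
  have ff: "j \<noteq> i \<Longrightarrow> f' j = f j" for j
    unfolding f_def f'_def by (intro sum.cong) (auto simp: q Pz_snoc)
  have Zq: "Zf (p@[q]) i = Z(k0 := x)"
  proof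
    fix \<kappa> show "Zf (p@[q]) i \<kappa> = (Z(k0 := x)) \<kappa>"
    proof (cases "\<kappa> = k0")
      case True then show ?thesis using emb_scl[of x] by (simp add: q Pz_snoc k0_def)
    next
      case False then show ?thesis by (simp add: q Pz_snoc k0_def Z_def)
    qed
  qed
  have fi: "f' i - f i = (\<Sum>\<kappa>\<in>K. phi \<kappa> x ((Z(k0 := x)) \<kappa>) - phi \<kappa> y (Z \<kappa>))"
    unfolding f_def f'_def Zq[symmetric] by (simp add: q sum_subtractf y_def G_def Z_def)
  have Phi2: "Phi I K (p@[q]) = Phi I K p + (f' i - f i)"
  proof -
    have "Phi I K (p@[q]) = (\<Sum>j\<in>I. f' j)" by (simp add: Phi_def f'_def)
    also have "\<dots> = f' i + (\<Sum>j\<in>I - {i}. f' j)" using snoc.prems(1) iI by (simp add: sum.remove)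
    also have "(\<Sum>j\<in>I - {i}. f' j) = (\<Sum>j\<in>I - {i}. f j)" using ff by (intro sum.cong) auto
    also have "(\<Sum>j\<in>I - {i}. f j) = (\<Sum>j\<in>I. f j) - f i" using snoc.prems(1) iI by (simp add: sum_diff1)
    also have "(\<Sum>j\<in>I. f j) = Phi I K p" by (simp add: Phi_def f_def)
    finally show ?thesis by simp
  qed
  have VZ: "valid \<kappa> (Z \<kappa>)" for \<kappa> unfolding Z_def by (rule valid_inv)
  have step: "\<bar>Z k0 - x\<bar> + (f' i - f i) \<le> Cst * \<bar>x - y\<bar>"
    unfolding fi k0_def using keyStep[OF snoc.prems(3) xK VZ, of y] by simp
  show ?case
    using IH step unfolding sum1 Phi2 scp by (simp add: algebra_simps abs_minus_commute)
qed

end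


lemma serve_cost_nonneg: "length cs = length \<sigma> \<Longrightarrow> 0 \<le> serve_cost c cs \<sigma>"
  using serve_cost_zip sc_nonneg by metis

lemma opt_nonneg: "0 \<le> opt_cost s \<sigma>"
  by (rule opt_cost_ge) (rule serve_cost_nonneg)

context geo
begin

lemma Cst_pos: "0 < Cst"
proof -
  have "0 \<le> C2" using rgt rpos by (simp add: C2_def)
  then show ?thesis using rpos by (simp add: Cst_def)
qed

lemma opt_decomp: "(\<Sum>\<kappa>\<in>cls ` set \<sigma>. w \<kappa> * opt_cost 0 (S \<kappa> \<sigma>)) \<le> Cst * opt_cost 0 \<sigma>"
proof -
  define T where "T = (\<Sum>\<kappa>\<in>cls ` set \<sigma>. w \<kappa> * opt_cost 0 (S \<kappa> \<sigma>))"
  have "T / Cst \<le> opt_cost 0 \<sigma>"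
  proof (rule opt_cost_ge)
    fix cs :: "nat list" assume len: "length cs = length \<sigma>"
    define p where "p = zip cs \<sigma>"
    have ps: "map snd p = \<sigma>" using len by (simp add: p_def)
    have I: "finite (set cs)" "fst ` set p \<subseteq> set cs" by (auto simp: p_def dest: set_zip_leftD)
    have K: "finite (cls ` set \<sigma>)" "cls ` snd ` set p \<subseteq> cls ` set \<sigma>" by (auto simp: p_def dest: set_zip_rightD)
    have "T \<le> (\<Sum>\<kappa>\<in>cls ` set \<sigma>. w \<kappa> * sc (\<lambda>_. 0) (Pz \<kappa> p))"
      unfolding T_def
    proof (rule sum_mono)
      fix \<kappa>
      have "opt_cost 0 (S \<kappa> \<sigma>) \<le> serve_cost (\<lambda>_. 0) (map fst (Pz \<kappa> p)) (S \<kappa> \<sigma>)"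
        by (rule opt_cost_le) (metis Pz_len ps)
      also have "\<dots> = sc (\<lambda>_. 0) (Pz \<kappa> p)" by (simp add: sc_def Pz_snd ps)
      finally show "w \<kappa> * opt_cost 0 (S \<kappa> \<sigma>) \<le> w \<kappa> * sc (\<lambda>_. 0) (Pz \<kappa> p)"
        using w_nonneg[of \<kappa>] by (rule mult_left_mono)
    qed
    also have "\<dots> \<le> Cst * sc (\<lambda>_. 0) p"
      using optdec[OF I K] Phi_nonneg[of "set cs" "cls ` set \<sigma>" p] by linarith
    also have "sc (\<lambda>_. 0) p = serve_cost (\<lambda>_. 0) cs \<sigma>" using len by (simp add: p_def serve_cost_zip)
    finally show "T / Cst \<le> serve_cost (\<lambda>_. 0) cs \<sigma>" using Cst_pos by (simp add: field_simps mult.commute)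
  qed
  then show ?thesis using Cst_pos by (simp add: T_def field_simps mult.commute)
qed

lemma opt_ge_a: assumes "\<sigma> \<noteq> []" "\<forall>x\<in>set \<sigma>. a \<le> x" shows "a \<le> opt_cost 0 \<sigma>"
proof (rule opt_cost_ge)
  fix cs :: "nat list" assume len: "length cs = length \<sigma>"
  obtain x \<sigma>' where s: "\<sigma> = x # \<sigma>'" using assms(1) by (cases \<sigma>) auto
  obtain i cs' where c: "cs = i # cs'" using len s by (cases cs) auto
  have "serve_cost (\<lambda>_. 0) cs \<sigma> = dist 0 x + serve_cost ((\<lambda>_. 0)(i := x)) cs' \<sigma>'" by (simp add: s c)
  moreover have "0 \<le> serve_cost ((\<lambda>_. 0)(i := x)) cs' \<sigma>'" using len s c by (intro serve_cost_nonneg) simp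
  moreover have "a \<le> dist 0 x" using assms(2) s apos by (simp add: dist_real_def)
  ultimately show "a \<le> serve_cost (\<lambda>_. 0) cs \<sigma>" by linarith
qed

lemma main:
  assumes H: "\<forall>\<sigma>. set \<sigma> \<subseteq> {0} \<union> {a..a*r} \<longrightarrow> alg_cost A 0 \<sigma> \<le> \<rho> * opt_cost 0 \<sigma> + c"
  shows "competitive (UNIV :: real set) 0"
proof -
  have c0: "0 \<le> c" using H[rule_format, of "[]"] by simp
  define \<rho>' where "\<rho>' = max \<rho> 0 + c / a"
  have rho'nn: "0 \<le> \<rho>'" using c0 apos by (simp add: \<rho>'_def)
  have inst: "alg_cost A 0 s \<le> \<rho>' * opt_cost 0 s" if s: "\<forall>x\<in>set s. a \<le> x \<and> x \<le> a * r" for s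
  proof (cases "s = []")
    case True then show ?thesis by simp
  next
    case False
    have oa: "a \<le> opt_cost 0 s" using opt_ge_a[OF False] s by simp
    have "set s \<subseteq> {0} \<union> {a..a*r}" using s by auto
    then have "alg_cost A 0 s \<le> \<rho> * opt_cost 0 s + c" using H by blast
    also have "\<rho> * opt_cost 0 s \<le> max \<rho> 0 * opt_cost 0 s" using opt_nonneg by (intro mult_right_mono) auto
    also have "c \<le> c / a * opt_cost 0 s"
    proof -
      have "c / a * a \<le> c / a * opt_cost 0 s" using oa c0 apos by (intro mult_left_mono) auto
      then show ?thesis using apos by simp
    qed
    finally show ?thesis by (simp add: \<rho>'_def algebra_simps)
  qed
  show ?thesis unfolding competitive_def
  proof (intro exI allI impI)
    fix \<sigma> :: "real list"
    define K where "K = cls ` set \<sigma>"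
    have "alg_cost (Abar A) 0 \<sigma> = (\<Sum>\<kappa>\<in>K. w \<kappa> * alg_cost A 0 (S \<kappa> \<sigma>))"
      using alg_decomp[of A \<sigma>] by (simp add: K_def)
    also have "\<dots> \<le> (\<Sum>\<kappa>\<in>K. \<rho>' * (w \<kappa> * opt_cost 0 (S \<kappa> \<sigma>)))"
    proof (rule sum_mono)
      fix \<kappa> assume "\<kappa> \<in> K"
      show "w \<kappa> * alg_cost A 0 (S \<kappa> \<sigma>) \<le> \<rho>' * (w \<kappa> * opt_cost 0 (S \<kappa> \<sigma>))"
      proof (cases \<kappa>)
        case None then show ?thesis by (simp add: w_def)
      next
        case (Some ks)
        have "\<forall>x\<in>set (S \<kappa> \<sigma>). a \<le> x \<and> x \<le> a * r"
          using scl_range Some by (auto simp: S_def less_imp_le)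
        then have "alg_cost A 0 (S \<kappa> \<sigma>) \<le> \<rho>' * opt_cost 0 (S \<kappa> \<sigma>)" by (rule inst)
        then have "w \<kappa> * alg_cost A 0 (S \<kappa> \<sigma>) \<le> w \<kappa> * (\<rho>' * opt_cost 0 (S \<kappa> \<sigma>))"
          using w_nonneg by (rule mult_left_mono)
        then show ?thesis by (simp add: algebra_simps)
      qed
    qed
    also have "\<dots> = \<rho>' * (\<Sum>\<kappa>\<in>K. w \<kappa> * opt_cost 0 (S \<kappa> \<sigma>))" by (simp add: sum_distrib_left)
    also have "\<dots> \<le> \<rho>' * (Cst * opt_cost 0 \<sigma>)"
      using opt_decomp[of \<sigma>] rho'nn by (intro mult_left_mono) (auto simp: K_def)
    finally show "alg_cost (Abar A) 0 \<sigma> \<le> (\<rho>' * Cst) * opt_cost 0 \<sigma> + 0" by simp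
  qed
qed

end

theorem corollary2:
  fixes a b :: real
  assumes "0 < a" and "a < b"
  shows "competitive (UNIV :: real set) 0 \<longleftrightarrow> competitive ({0} \<union> {a..b}) 0"
proof
  assume "competitive (UNIV :: real set) 0"
  then show "competitive ({0} \<union> {a..b}) 0" unfolding competitive_def by blast
next
  assume "competitive ({0} \<union> {a..b}) 0"
  then obtain A \<rho> c where H: "\<forall>\<sigma>. set \<sigma> \<subseteq> {0} \<union> {a..b} \<longrightarrow> alg_cost A 0 \<sigma> \<le> \<rho> * opt_cost 0 \<sigma> + c"
    unfolding competitive_def by blast
  interpret g: geo a "b/a" using assms by unfold_locales auto
  have ab: "a * (b / a) = b" using assms by simp
  show "competitive (UNIV :: real set) 0" using g.main[of A \<rho> c] H unfolding ab by blast
qed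


end
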